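(* For $r\in\{1,2\}$, $\mathcal{C}_r$ is a separable overpartition class with basis $\mathcal{G}_r=\bigcup_{m\ge1}\mathcal{G}_r(m)$. That is: - each $\mathcal{G}_r(m)$ is finite; - every overpartition in $\mathcal{C}_r$ with exactly $m\ge1$ parts can be written uniquely as $(b_1+\pi_1,\dots,b_m+\pi_m)$ with $(b_1,\dots,b_m)\in\mathcal{G}_r(m)$ and $\pi_1\ge\dots\ge\pi_m\ge0$ integers; - every such expression lies in $\mathcal{C}_r$. Consequently \[\sum_{\pi\in\mathcal{C}_r}q^{|\pi|}=1+\sum_{m\ge1}\frac{1}{(q;q)_m}\sum_{\pi\in\mathcal{G}_r(m)}q^{|\pi|}.\]
   Context: An overpartition is a partition in which the first occurrence of each part size may be overlined. Its parts are listed in non-increasing order with respect to $1<\bar1<2<\bar2<\cdots$. A part is of size $t$ if it is $t$ or $\bar t$. For an integer $b\ge0$, adding $b$ to a part of size $t$ gives the part of size $t+b$ with the same overline status. For $r\in\{1,2\}$, $\mathcal{C}_r$ is the set of overpartitions $(\pi_1,\dots,\pi_\ell)$ such that: - for each $1\le i<\ell$, the size of $\pi_i$ minus the size of $\pi_{i+1}$ is at least $1$, and at least $2$ if $\pi_i$ is non-overlined; - at most $r-1$ parts equal the non-overlined part $1$. For $m\ge1$, $\mathcal{G}(m)$ is the set of overpartitions $(\pi_1,\dots,\pi_m)$ such that for every $1\le i<m$, if $\pi_{i+1}$ has size $t$ then $\pi_i\in\{\overline{t+1},\,t+2\}$. Further: - $\mathcal{G}_2(m)$ is the subset of $\mathcal{G}(m)$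 with smallest part $\pi_m\in\{1,\bar1\}$; - $\mathcal{G}_1(m)$ is the subset with $\pi_m\in\{\bar1,2\}$. $(a;q)_n=\prod_{i=0}^{n-1}(1-aq^i)$. *)

theory Defs
  imports "HOL-Analysis.Analysis" "HOL-Computational_Algebra.Formal_Power_Series"
begin

text \<open>A part is a pair (size, overlined). The ordering 1 < 1bar < 2 < 2bar < ... is the
lexicographic order on (size, overlined) with False < True.\<close>

type_synonym part = "nat \<times> bool"

definition psize :: "part \<Rightarrow> nat" where "psize p = fst p"
definition povl :: "part \<Rightarrow> bool" where "povl p = snd p"

definition part_le :: "part \<Rightarrow> part \<Rightarrow> bool" where
  "part_le p q \<longleftrightarrow> psize p < psize q \<or> (psize p = psize q \<and> (povl p \<longrightarrow> povl q))"

text \<open>Overpartition: positive part sizes, listed non-increasingly w.r.t. the order above,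
and only the first occurrence of a size may be overlined (so equal parts are non-overlined).\<close>

definition is_overpartition :: "part list \<Rightarrow> bool" where
  "is_overpartition xs \<longleftrightarrow>
     (\<forall>p\<in>set xs. psize p \<ge> 1) \<and>
     sorted_wrt (\<lambda>a b. part_le b a \<and> (a = b \<longrightarrow> \<not> povl a)) xs"

definition weight :: "part list \<Rightarrow> nat" where
  "weight xs = (\<Sum>p\<leftarrow>xs. psize p)"

definition C :: "nat \<Rightarrow> part list set" where
  "C r = {xs. is_overpartition xs \<and>
      (\<forall>i. Suc i < length xs \<longrightarrow>
         psize (xs ! i) \<ge> psize (xs ! Suc i) + (if povl (xs ! i) then 1 else 2)) \<and>
      length (filter (\<lambda>p. p = (1, False)) xs) \<le> r - 1}"

definition G :: "nat \<Rightarrow> part list set" where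
  "G m = {xs. is_overpartition xs \<and> length xs = m \<and>
      (\<forall>i. Suc i < length xs \<longrightarrow>
         xs ! i \<in> {(psize (xs ! Suc i) + 1, True), (psize (xs ! Suc i) + 2, False)})}"

definition Gr :: "nat \<Rightarrow> nat \<Rightarrow> part list set" where
  "Gr r m = {xs \<in> G m. m \<ge> 1 \<and>
      (if r = 2 then last xs \<in> {(1, False), (1, True)} else last xs \<in> {(1, True), (2, False)})}"

definition add_part :: "part \<Rightarrow> nat \<Rightarrow> part" where
  "add_part p b = (psize p + b, povl p)"

definition add_parts :: "part list \<Rightarrow> nat list \<Rightarrow> part list" where
  "add_parts bs ps = map2 add_part bs ps"

definition qpoch :: "nat \<Rightarrow> rat fps" where
  "qpoch m = (\<Prod>i<m. 1 - fps_X ^ (i + 1))"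

definition gen_fun :: "part list set \<Rightarrow> rat fps" where
  "gen_fun S = Abs_fps (\<lambda>n. of_nat (card {xs \<in> S. weight xs = n}))"

end

theory Submission imports Defs begin

definition dd :: "bool \<Rightarrow> nat" where "dd b = (if b then 1 else 2)"
definition lastbase :: "nat \<Rightarrow> bool \<Rightarrow> nat" where "lastbase r b = (if r = 2 then 1 else dd b)"
definition Gc :: "part \<Rightarrow> part \<Rightarrow> bool" where "Gc a b \<longleftrightarrow> fst a = fst b + dd (snd a)"
definition Cc :: "part \<Rightarrow> part \<Rightarrow> bool" where "Cc a b \<longleftrightarrow> fst a \<ge> fst b + dd (snd a)"

fun bse :: "nat \<Rightarrow> part list \<Rightarrow> part list" where
  "bse r [] = []"
| "bse r [p] = [(lastbase r (snd p), snd p)]"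
| "bse r (p # q # rest) = (let bs = bse r (q # rest) in (fst (hd bs) + dd (snd p), snd p) # bs)"

lemma bse_len: "length (bse r xs) = length xs"
  by (induction r xs rule: bse.induct) (auto simp: Let_def)

lemma bse_snd: "map snd (bse r xs) = map snd xs"
  by (induction r xs rule: bse.induct) (auto simp: Let_def)

lemma bse_cong: "map snd xs = map snd ys \<Longrightarrow> bse r xs = bse r ys"
proof (induction r xs arbitrary: ys rule: bse.induct)
  case (1 r) then show ?case by simp
next
  case (2 r p) then show ?case by (cases ys) auto
next
  case (3 r p q rest)
  then obtain p' q' rest' where "ys = p' # q' # rest'" by (cases ys; cases "tl ys") auto
  with 3(2) have e: "map snd (q # rest) = map snd (q' # rest')" and "snd p = snd p'" by auto
  have "bse r (q # rest) = bse r (q' # rest')" by (rule 3(1)[OF e])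
  with \<open>snd p = snd p'\<close> \<open>ys = _\<close> show ?case by (simp add: Let_def)
qed

lemma bse_chain: "successively Gc (bse r xs)"
proof (induction r xs rule: bse.induct)
  case (3 r p q rest)
  then show ?case
    by (cases "bse r (q # rest)") (auto simp: Let_def Gc_def)
qed auto

lemma bse_last: "xs \<noteq> [] \<Longrightarrow> last (bse r xs) = (lastbase r (snd (last xs)), snd (last xs))"
proof (induction r xs rule: bse.induct)
  case (3 r p q rest)
  have "bse r (q # rest) \<noteq> []" using bse_len[of r "q#rest"] by auto
  with 3 show ?case by (auto simp: Let_def)
qed auto

definition validb :: "nat \<Rightarrow> part list \<Rightarrow> bool" where
  "validb r bs \<longleftrightarrow> bs \<noteq> [] \<and> successively Gc bs \<and> fst (last bs) = lastbase r (snd (last bs))"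

lemma validb_bse: "validb r bs \<Longrightarrow> bse r bs = bs"
proof (induction r bs rule: bse.induct)
  case (3 r p q rest)
  have v: "validb r (q # rest)" using 3(2) unfolding validb_def by simp
  have ih: "bse r (q # rest) = q # rest" by (rule 3(1)[OF v])
  have g: "fst p = fst q + dd (snd p)" using 3(2) unfolding validb_def by (simp add: Gc_def)
  have "bse r (p # q # rest) = (fst q + dd (snd p), snd p) # q # rest" using ih by (simp add: Let_def)
  also have "(fst q + dd (snd p), snd p) = p" using g by (simp add: prod_eq_iff)
  finally show ?case .
qed (auto simp: validb_def lastbase_def prod_eq_iff)

lemma validb_bse2: "xs \<noteq> [] \<Longrightarrow> validb r (bse r xs)"
proof -
  assume xs: "xs \<noteq> []"
  have ne: "bse r xs \<noteq> []" using bse_len[of r xs] xs by auto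
  have l: "last (bse r xs) = (lastbase r (snd (last xs)), snd (last xs))" by (rule bse_last[OF xs])
  show ?thesis unfolding validb_def using ne bse_chain[of r xs] l by simp
qed

lemma add_parts_Cons: "add_parts (b # bs) (p # ps) = add_part b p # add_parts bs ps"
  by (simp add: add_parts_def)

lemma add_parts_snd: "length ps = length bs \<Longrightarrow> map snd (add_parts bs ps) = map snd bs"
  by (induction bs arbitrary: ps) (auto simp: add_parts_def add_part_def povl_def length_Suc_conv)

lemma add_parts_len: "length ps = length bs \<Longrightarrow> length (add_parts bs ps) = length bs"
  by (simp add: add_parts_def)

lemma add_parts_inj: "add_parts bs ps = add_parts bs ps' \<Longrightarrow> length ps = length bs \<Longrightarrow> length ps' = length bs \<Longrightarrow> ps = ps'"
proof (induction bs arbitrary: ps ps')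
  case (Cons b bs)
  then obtain p ps1 p' ps1' where "ps = p # ps1" "ps' = p' # ps1'" by (auto simp: length_Suc_conv)
  with Cons show ?case by (auto simp: add_parts_Cons add_part_def psize_def povl_def)
qed simp

lemma weight_add_parts: "length ps = length bs \<Longrightarrow> weight (add_parts bs ps) = weight bs + sum_list ps"
proof (induction bs arbitrary: ps)
  case (Cons b bs)
  then obtain p ps1 where "ps = p # ps1" by (auto simp: length_Suc_conv)
  with Cons show ?case by (auto simp: add_parts_Cons add_part_def psize_def weight_def)
qed (simp add: weight_def add_parts_def)

lemma exist_dec:
  "xs \<noteq> [] \<Longrightarrow> successively Cc xs \<Longrightarrow> fst (last xs) \<ge> lastbase r (snd (last xs)) \<Longrightarrow>
   \<exists>ps. length ps = length xs \<and> sorted_wrt (\<ge>) ps \<and> xs = add_parts (bse r xs) ps"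
proof (induction r xs rule: bse.induct)
  case (2 r p)
  show ?case
    by (rule exI[of _ "[fst p - lastbase r (snd p)]"])
       (use 2 in \<open>auto simp: add_parts_def add_part_def psize_def povl_def\<close>)
next
  case (3 r p q rest)
  have pre: "successively Cc (q # rest)" "fst (last (q # rest)) \<ge> lastbase r (snd (last (q # rest)))"
    using 3(3,4) by auto
  from 3(1)[OF _ pre] obtain ps' where ps': "length ps' = length (q # rest)" "sorted_wrt (\<ge>) ps'"
     "q # rest = add_parts (bse r (q # rest)) ps'" by blast
  obtain b' bs'' where bq: "bse r (q # rest) = b' # bs''"
    using bse_len[of r "q # rest"] by (cases "bse r (q # rest)") auto
  obtain h ps'' where hp: "ps' = h # ps''" using ps'(1) by (cases ps') auto
  have e: "q # rest = add_parts (b' # bs'') ps'" using ps'(3) unfolding bq .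
  have q: "q = (fst b' + h, snd b')" using e hp by (simp add: add_parts_Cons add_part_def psize_def povl_def)
  have cc: "fst p \<ge> fst q + dd (snd p)" using 3(3) by (simp add: Cc_def)
  define x where "x = fst p - (fst b' + dd (snd p))"
  have xh: "x \<ge> h" using cc q by (simp add: x_def)
  show ?case
  proof (rule exI[of _ "x # ps'"], intro conjI)
    show "length (x # ps') = length (p # q # rest)" using ps'(1) by simp
    show "sorted_wrt (\<ge>) (x # ps')" using ps'(2) xh hp by auto
    have b: "bse r (p # q # rest) = (fst b' + dd (snd p), snd p) # b' # bs''" using bq by (simp add: Let_def)
    have "add_part (fst b' + dd (snd p), snd p) x = p" using cc q
      by (simp add: add_part_def psize_def povl_def x_def prod_eq_iff)
    then have h2: "add_parts (bse r (p # q # rest)) (x # ps') = p # add_parts (b' # bs'') ps'"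
      unfolding b add_parts_Cons by (simp only:)
    show "p # q # rest = add_parts (bse r (p # q # rest)) (x # ps')"
      by (simp only: h2 e[symmetric])
  qed
qed auto

lemma closure_chain:
  "successively Gc bs \<Longrightarrow> length ps = length bs \<Longrightarrow> sorted_wrt (\<ge>) ps \<Longrightarrow> successively Cc (add_parts bs ps)"
proof (induction bs arbitrary: ps rule: induct_list012)
  case (3 a b rest)
  from 3(4) obtain p1 p2 ps'' where ps: "ps = p1 # p2 # ps''" by (auto simp: length_Suc_conv)
  have g: "Gc a b" "successively Gc (b # rest)" using 3(3) by auto
  have l: "length (p2 # ps'') = length (b # rest)" using 3(4) ps by simp
  have so: "sorted_wrt (\<ge>) (p2 # ps'')" "p1 \<ge> p2" using 3(5) ps by auto
  have "successively Cc (add_parts (b # rest) (p2 # ps''))" by (rule 3(2)[OF g(2) l so(1)])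
  moreover have "Cc (add_part a p1) (add_part b p2)" using g(1) so(2)
    by (simp add: Gc_def Cc_def add_part_def psize_def povl_def)
  ultimately show ?case using ps by (simp add: add_parts_Cons)
qed (auto simp: add_parts_def length_Suc_conv)

lemma add_parts_set: "length ps = length bs \<Longrightarrow> x \<in> set (add_parts bs ps) \<Longrightarrow> \<exists>b\<in>set bs. fst x \<ge> fst b \<and> snd x = snd b"
proof (induction bs arbitrary: ps)
  case (Cons b bs)
  then obtain p ps1 where ps: "ps = p # ps1" by (auto simp: length_Suc_conv)
  have l: "length ps1 = length bs" using Cons(2) ps by simp
  show ?case
  proof (cases "x = add_part b p")
    case True then show ?thesis by (auto simp: add_part_def psize_def povl_def)
  next
    case False
    then have "x \<in> set (add_parts bs ps1)" using Cons(3) ps by (simp add: add_parts_Cons)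
    from Cons.IH[OF l this] show ?thesis by auto
  qed
qed (simp add: add_parts_def)

lemma add_parts_last: "length ps = length bs \<Longrightarrow> bs \<noteq> [] \<Longrightarrow>
   fst (last (add_parts bs ps)) \<ge> fst (last bs) \<and> snd (last (add_parts bs ps)) = snd (last bs)"
proof (induction bs arbitrary: ps)
  case (Cons b bs)
  then obtain p ps1 where ps: "ps = p # ps1" by (auto simp: length_Suc_conv)
  show ?case
  proof (cases "bs = []")
    case True then show ?thesis using ps by (auto simp: add_parts_def add_part_def psize_def povl_def)
  next
    case False
    then have "add_parts bs ps1 \<noteq> []" using Cons(2) ps add_parts_len[of ps1 bs] by auto
    have l: "length ps1 = length bs" using Cons(2) ps by simp
    from Cons.IH[OF l False] \<open>add_parts bs ps1 \<noteq> []\<close> False show ?thesis using ps by (simp add: add_parts_Cons)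
  qed
qed simp

lemma base_props: "validb r bs \<Longrightarrow> b \<in> set bs \<Longrightarrow> fst b \<ge> 1 \<and> fst b \<le> 2 * length bs \<and> (r \<noteq> 2 \<longrightarrow> fst b \<ge> dd (snd b))"
proof (induction bs arbitrary: b)
  case (Cons a bs)
  show ?case
  proof (cases "bs = []")
    case True then show ?thesis using Cons(2,3) by (auto simp: validb_def lastbase_def dd_def)
  next
    case False
    then have v: "validb r bs" using Cons(2) by (auto simp: validb_def successively_Cons)
    have a: "fst a = fst (hd bs) + dd (snd a)" using Cons(2) False by (auto simp: validb_def successively_Cons Gc_def)
    have "hd bs \<in> set bs" using False by simp
    from Cons(1)[OF v this] have "fst (hd bs) \<ge> 1 \<and> fst (hd bs) \<le> 2 * length bs" by blast
    then have "fst a \<ge> 1 \<and> fst a \<le> 2 * length (a # bs) \<and> fst a \<ge> dd (snd a)"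
      using a by (auto simp: dd_def)
    show ?thesis
    proof (cases "b = a")
      case True then show ?thesis using \<open>fst a \<ge> 1 \<and> _\<close> by auto
    next
      case False
      then have "b \<in> set bs" using Cons(3) by auto
      from Cons(1)[OF v this] show ?thesis by auto
    qed
  qed
qed (simp add: validb_def)

lemma Cc_strict: "successively Cc xs \<Longrightarrow> sorted_wrt (\<lambda>a b. fst b < fst a) xs"
proof -
  assume "successively Cc xs"
  then have "successively (\<lambda>a b. fst b < fst a) xs"
    by (rule successively_mono) (auto simp: Cc_def dd_def split: if_splits)
  then show ?thesis by (subst (asm) successively_conv_sorted_wrt) (auto simp: transp_def)
qed

lemma Gc_Cc: "successively Gc xs \<Longrightarrow> successively Cc xs"
  by (erule successively_mono) (simp add: Cc_def Gc_def)

lemma strict_overp: "sorted_wrt (\<lambda>a b. fst b < fst a) xs \<Longrightarrow> (\<forall>p\<in>set xs. fst p \<ge> 1) \<Longrightarrow> is_overpartition xs"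
  unfolding is_overpartition_def
  by (auto simp: psize_def part_le_def elim!: sorted_wrt_mono_rel[rotated])

lemma strict_count: "sorted_wrt (\<lambda>a b. fst b < fst a) (xs :: part list) \<Longrightarrow> length (filter (\<lambda>p. p = c) xs) \<le> 1"
proof (induction xs)
  case (Cons x xs)
  show ?case
  proof (cases "x = c")
    case True
    have "\<forall>y\<in>set xs. fst y < fst x" using Cons(2) by simp
    then have "c \<notin> set xs" using True by (metis less_irrefl)
    then have "filter (\<lambda>p. p = c) xs = []" by (auto simp: filter_empty_conv)
    then show ?thesis by simp
  next
    case False then show ?thesis using Cons by auto
  qed
qed simp

lemma C_iff: "xs \<in> C r \<longleftrightarrow> (\<forall>p\<in>set xs. fst p \<ge> 1) \<and> successively Cc xs \<and>
    length (filter (\<lambda>p. p = (1, False)) xs) \<le> r - 1"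
proof -
  have s: "successively Cc xs \<longleftrightarrow> (\<forall>i. Suc i < length xs \<longrightarrow>
         psize (xs ! i) \<ge> psize (xs ! Suc i) + (if povl (xs ! i) then 1 else 2))"
    by (simp add: successively_conv_nth Cc_def dd_def psize_def povl_def)
  show ?thesis
    unfolding C_def mem_Collect_eq s[symmetric]
    using strict_overp[OF Cc_strict] by (auto simp: is_overpartition_def psize_def)
qed

lemma Gr_iff: "r \<in> {1, 2} \<Longrightarrow> bs \<in> Gr r m \<longleftrightarrow> validb r bs \<and> length bs = m"
proof -
  assume r: "r \<in> {1, 2}"
  have s: "successively Gc bs \<longleftrightarrow> (\<forall>i. Suc i < length bs \<longrightarrow>
         bs ! i \<in> {(psize (bs ! Suc i) + 1, True), (psize (bs ! Suc i) + 2, False)})"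
    unfolding successively_conv_nth Gc_def dd_def psize_def
    by (intro all_cong1 imp_cong refl) (auto simp: prod_eq_iff)
  have l: "(if r = 2 then last bs \<in> {(1, False), (1, True)} else last bs \<in> {(1, True), (2, False)})
      \<longleftrightarrow> fst (last bs) = lastbase r (snd (last bs))"
    using r by (cases "last bs") (auto simp: lastbase_def dd_def)
  show ?thesis
  proof
    assume "bs \<in> Gr r m"
    then show "validb r bs \<and> length bs = m"
      unfolding Gr_def G_def validb_def mem_Collect_eq s[symmetric] l by auto
  next
    assume a: "validb r bs \<and> length bs = m"
    then have "is_overpartition bs"
      using strict_overp[OF Cc_strict[OF Gc_Cc]] base_props[of r bs] by (auto simp: validb_def)
    with a show "bs \<in> Gr r m"
      unfolding Gr_def G_def validb_def mem_Collect_eq s[symmetric] l by (auto simp: Suc_le_eq)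
  qed
qed

lemma T1: "r \<in> {1, 2} \<Longrightarrow> finite (Gr r m)"
proof -
  assume r: "r \<in> {1, 2}"
  have "Gr r m \<subseteq> {bs. set bs \<subseteq> {0..2*m} \<times> UNIV \<and> length bs = m}"
  proof
    fix bs assume "bs \<in> Gr r m"
    then have v: "validb r bs" and l: "length bs = m" using Gr_iff[OF r] by auto
    have "set bs \<subseteq> {0..2*m} \<times> UNIV"
    proof
      fix b assume "b \<in> set bs"
      from base_props[OF v this] l show "b \<in> {0..2*m} \<times> UNIV" by (cases b) auto
    qed
    with l show "bs \<in> {bs. set bs \<subseteq> {0..2*m} \<times> UNIV \<and> length bs = m}" by simp
  qed
  moreover have "finite {bs. set bs \<subseteq> {0..2*m} \<times> (UNIV :: bool set) \<and> length bs = m}"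
    by (rule finite_lists_length_eq) simp
  ultimately show ?thesis by (rule finite_subset)
qed

lemma T3: "r \<in> {1, 2} \<Longrightarrow> bs \<in> Gr r m \<Longrightarrow> length ps = m \<Longrightarrow> sorted_wrt (\<ge>) ps \<Longrightarrow> add_parts bs ps \<in> C r"
proof -
  assume r: "r \<in> {1, 2}" and bs: "bs \<in> Gr r m" and lp: "length ps = m" and so: "sorted_wrt (\<ge>) ps"
  from bs have v: "validb r bs" and l: "length bs = m" using Gr_iff[OF r] by auto
  have lp': "length ps = length bs" using lp l by simp
  have pos: "\<forall>p\<in>set (add_parts bs ps). fst p \<ge> 1"
  proof
    fix x assume "x \<in> set (add_parts bs ps)"
    from add_parts_set[OF lp' this] obtain b where "b \<in> set bs" "fst x \<ge> fst b" by blast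
    with base_props[OF v \<open>b \<in> set bs\<close>] show "fst x \<ge> 1" by simp
  qed
  have ch: "successively Cc (add_parts bs ps)"
    using closure_chain[OF _ lp' so] v by (simp add: validb_def)
  have cnt: "length (filter (\<lambda>p. p = (1, False)) (add_parts bs ps)) \<le> r - 1"
  proof (cases "r = 2")
    case True
    then show ?thesis using strict_count[OF Cc_strict[OF ch]] by simp
  next
    case False
    then have r1: "r = 1" using r by simp
    have "(1, False) \<notin> set (add_parts bs ps)"
    proof
      assume "(1, False) \<in> set (add_parts bs ps)"
      from add_parts_set[OF lp' this] obtain b where b: "b \<in> set bs" "1 \<ge> fst b" "snd b = False" by auto
      from base_props[OF v b(1)] r1 b show False by (simp add: dd_def)
    qed
    then have "filter (\<lambda>p. p = (1, False)) (add_parts bs ps) = []" by (auto simp: filter_empty_conv)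
    then show ?thesis by simp
  qed
  show ?thesis unfolding C_iff using pos ch cnt by blast
qed

lemma T2: "r \<in> {1, 2} \<Longrightarrow> m \<ge> 1 \<Longrightarrow> xs \<in> C r \<Longrightarrow> length xs = m \<Longrightarrow>
  (\<exists>!(bs, ps). bs \<in> Gr r m \<and> length ps = m \<and> sorted_wrt (\<ge>) ps \<and> xs = add_parts bs ps)"
proof -
  assume r: "r \<in> {1, 2}" and m: "m \<ge> 1" and xs: "xs \<in> C r" and l: "length xs = m"
  have ne: "xs \<noteq> []" using m l by auto
  from xs have pos: "\<forall>p\<in>set xs. fst p \<ge> 1" and ch: "successively Cc xs"
    and cnt: "length (filter (\<lambda>p. p = (1, False)) xs) \<le> r - 1" unfolding C_iff by auto
  have lastin: "last xs \<in> set xs" using ne by simp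
  have lb: "fst (last xs) \<ge> lastbase r (snd (last xs))"
  proof (cases "r = 2")
    case True then show ?thesis using pos lastin by (simp add: lastbase_def)
  next
    case False
    then have "r = 1" using r by simp
    then have "filter (\<lambda>p. p = (1, False)) xs = []" using cnt by simp
    then have "(1, False) \<notin> set xs" by (auto simp: filter_empty_conv)
    then have "last xs \<noteq> (1, False)" using lastin by metis
    then show ?thesis using pos lastin False by (cases "last xs") (auto simp: lastbase_def dd_def)
  qed
  from exist_dec[OF ne ch lb] obtain ps where ps: "length ps = length xs" "sorted_wrt (\<ge>) ps"
    "xs = add_parts (bse r xs) ps" by blast
  have bin: "bse r xs \<in> Gr r m" using Gr_iff[OF r] validb_bse2[OF ne] bse_len[of r xs] l by simp
  show ?thesis
  proof (rule ex1I[of _ "(bse r xs, ps)"])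
    show "case (bse r xs, ps) of (bs, ps) \<Rightarrow> bs \<in> Gr r m \<and> length ps = m \<and> sorted_wrt (\<ge>) ps \<and> xs = add_parts bs ps"
      using bin ps(1,2) l by (simp add: ps(3)[symmetric])
  next
    fix y assume y: "case y of (bs, ps) \<Rightarrow> bs \<in> Gr r m \<and> length ps = m \<and> sorted_wrt (\<ge>) ps \<and> xs = add_parts bs ps"
    obtain bs' ps' where yy: "y = (bs', ps')" by (cases y)
    with y have b': "bs' \<in> Gr r m" and p': "length ps' = m" "xs = add_parts bs' ps'" by auto
    have v': "validb r bs'" and lb': "length bs' = m" using b' Gr_iff[OF r] by auto
    have "map snd xs = map snd bs'" using p' lb' add_parts_snd[of ps' bs'] by simp
    then have "bse r xs = bse r bs'" by (rule bse_cong)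
    then have eb: "bs' = bse r xs" using validb_bse[OF v'] by simp
    have "xs = add_parts (bse r xs) ps'" using p'(2) eb by (simp only:)
    with ps(3) have "add_parts (bse r xs) ps = add_parts (bse r xs) ps'" by (rule subst)
    then have "ps' = ps" using add_parts_inj[of "bse r xs" ps ps'] ps(1) p'(1) bse_len[of r xs] l by simp
    then show "y = (bse r xs, ps)" using yy eb by simp
  qed
qed

definition NIs :: "nat \<Rightarrow> nat \<Rightarrow> nat list set" where
  "NIs k n = {ps. length ps = k \<and> sorted_wrt (\<ge>) ps \<and> sum_list ps = n}"

lemma NIs_fin: "finite (NIs k n)"
proof (rule finite_subset)
  show "NIs k n \<subseteq> {ps. set ps \<subseteq> {0..n} \<and> length ps = k}"
    by (auto simp: NIs_def member_le_sum_list)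
  show "finite {ps. set ps \<subseteq> {0..n} \<and> length ps = k}" by (rule finite_lists_length_eq) simp
qed

lemma sum_list_map_Suc: "sum_list (map Suc ps) = sum_list ps + length ps"
  by (induction ps) auto

lemma NIs_split0: "{ps \<in> NIs (Suc k) n. 0 \<in> set ps} = (\<lambda>ps. ps @ [0]) ` NIs k n"
proof
  show "{ps \<in> NIs (Suc k) n. 0 \<in> set ps} \<subseteq> (\<lambda>ps. ps @ [0]) ` NIs k n"
  proof
    fix ps assume a: "ps \<in> {ps \<in> NIs (Suc k) n. 0 \<in> set ps}"
    then have "ps \<noteq> []" by (auto simp: NIs_def)
    then obtain ys z where ps: "ps = ys @ [z]" by (cases ps rule: rev_exhaust) auto
    have so: "sorted_wrt (\<ge>) ys" "\<forall>x\<in>set ys. z \<le> x" using a ps by (auto simp: NIs_def sorted_wrt_append)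
    have "z = 0" using a ps so(2) by auto
    then have "ys \<in> NIs k n" using a ps so(1) by (auto simp: NIs_def)
    then show "ps \<in> (\<lambda>ps. ps @ [0]) ` NIs k n" using ps \<open>z = 0\<close> by blast
  qed
next
  show "(\<lambda>ps. ps @ [0]) ` NIs k n \<subseteq> {ps \<in> NIs (Suc k) n. 0 \<in> set ps}"
    by (auto simp: NIs_def sorted_wrt_append)
qed

lemma NIs_split1: "{ps \<in> NIs (Suc k) n. 0 \<notin> set ps} =
   map Suc ` {ps. length ps = Suc k \<and> sorted_wrt (\<ge>) ps \<and> sum_list ps + Suc k = n}"
proof
  show "{ps \<in> NIs (Suc k) n. 0 \<notin> set ps} \<subseteq> map Suc ` {ps. length ps = Suc k \<and> sorted_wrt (\<ge>) ps \<and> sum_list ps + Suc k = n}"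
  proof
    fix ps assume a: "ps \<in> {ps \<in> NIs (Suc k) n. 0 \<notin> set ps}"
    define qs where "qs = map (\<lambda>x. x - 1) ps"
    have nz: "0 \<notin> set ps" using a by simp
    have e: "ps = map Suc qs" unfolding qs_def using nz by (induction ps) auto
    have "length qs = Suc k" "sorted_wrt (\<ge>) qs" "sum_list qs + Suc k = n"
      using a e sum_list_map_Suc[of qs] by (auto simp: NIs_def sorted_wrt_map)
    then show "ps \<in> map Suc ` {ps. length ps = Suc k \<and> sorted_wrt (\<ge>) ps \<and> sum_list ps + Suc k = n}"
      using e by blast
  qed
next
  show "map Suc ` {ps. length ps = Suc k \<and> sorted_wrt (\<ge>) ps \<and> sum_list ps + Suc k = n} \<subseteq> {ps \<in> NIs (Suc k) n. 0 \<notin> set ps}"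
    by (auto simp: NIs_def sorted_wrt_map sum_list_map_Suc)
qed

lemma NIs_card_rec: "card (NIs (Suc k) n) = card (NIs k n) + (if n < Suc k then 0 else card (NIs (Suc k) (n - Suc k)))"
proof -
  let ?B = "{ps. length ps = Suc k \<and> sorted_wrt (\<ge>) ps \<and> sum_list ps + Suc k = n}"
  have B: "?B = (if n < Suc k then {} else NIs (Suc k) (n - Suc k))" by (auto simp: NIs_def)
  have un: "NIs (Suc k) n = {ps \<in> NIs (Suc k) n. 0 \<in> set ps} \<union> {ps \<in> NIs (Suc k) n. 0 \<notin> set ps}" by auto
  have "card (NIs (Suc k) n) = card {ps \<in> NIs (Suc k) n. 0 \<in> set ps} + card {ps \<in> NIs (Suc k) n. 0 \<notin> set ps}"
    by (subst un, rule card_Un_disjoint) (auto intro: finite_subset[OF _ NIs_fin[of "Suc k" n]])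
  also have "card {ps \<in> NIs (Suc k) n. 0 \<in> set ps} = card (NIs k n)"
    unfolding NIs_split0 by (rule card_image) (auto simp: inj_on_def)
  also have "card {ps \<in> NIs (Suc k) n. 0 \<notin> set ps} = card ?B"
    unfolding NIs_split1 by (rule card_image) (auto simp: inj_on_def)
  also have "card ?B = (if n < Suc k then 0 else card (NIs (Suc k) (n - Suc k)))"
    unfolding B by simp
  finally show ?thesis .
qed

definition FF :: "nat \<Rightarrow> rat fps" where
  "FF k = Abs_fps (\<lambda>n. of_nat (card (NIs k n)))"

lemma FF_rec: "FF (Suc k) = FF k + fps_X ^ Suc k * FF (Suc k)"
proof (rule fps_ext)
  fix n
  show "fps_nth (FF (Suc k)) n = fps_nth (FF k + fps_X ^ Suc k * FF (Suc k)) n"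
    unfolding FF_def fps_add_nth fps_X_power_mult_nth fps_nth_Abs_fps
    by (subst NIs_card_rec) simp
qed

lemma FF_0: "FF 0 = 1"
proof (rule fps_ext)
  fix n
  have "NIs 0 n = (if n = 0 then {[]} else {})" by (auto simp: NIs_def)
  then show "fps_nth (FF 0) n = fps_nth 1 n" by (simp add: FF_def)
qed

lemma diff_helper: "(a::'a::ab_group_add) = b + c \<Longrightarrow> a - c = b" by simp

lemma FF_qpoch: "FF k * qpoch k = 1"
proof (induction k)
  case 0 then show ?case by (simp add: FF_0 qpoch_def)
next
  case (Suc k)
  have q: "qpoch (Suc k) = qpoch k * (1 - fps_X ^ Suc k)" by (simp add: qpoch_def)
  have d: "FF (Suc k) - fps_X ^ Suc k * FF (Suc k) = FF k" by (rule diff_helper[OF FF_rec])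
  have "FF (Suc k) * (1 - fps_X ^ Suc k) = FF (Suc k) - fps_X ^ Suc k * FF (Suc k)"
    by (simp add: right_diff_distrib mult.commute)
  also have "\<dots> = FF k" by (rule d)
  finally have e: "FF (Suc k) * (1 - fps_X ^ Suc k) = FF k" .
  have "FF (Suc k) * qpoch (Suc k) = (FF (Suc k) * (1 - fps_X ^ Suc k)) * qpoch k"
    unfolding q by (simp only: ac_simps)
  also have "\<dots> = FF k * qpoch k" by (simp only: e)
  finally show ?case using Suc by simp
qed

lemma inv_qpoch: "inverse (qpoch k) = FF k"
  by (rule fps_inverse_unique) (subst mult.commute, rule FF_qpoch)

lemma coeff_lemma: "fps_nth (inverse (qpoch k) * fps_X ^ w) n =
   of_nat (card {ps. length ps = k \<and> sorted_wrt (\<ge>) ps \<and> w + sum_list ps = n})"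
proof -
  have "{ps. length ps = k \<and> sorted_wrt (\<ge>) ps \<and> w + sum_list ps = n} = (if n < w then {} else NIs k (n - w))"
    by (auto simp: NIs_def)
  then show ?thesis by (simp add: inv_qpoch fps_X_power_mult_right_nth FF_def)
qed


lemma uniq_helper: "\<exists>!x. Q x \<Longrightarrow> Q a \<Longrightarrow> Q b \<Longrightarrow> a = b" by blast

lemma weight_Cons: "weight (x # xs) = fst x + weight xs"
  by (simp add: weight_def psize_def)

lemma len_weight: "\<forall>p\<in>set xs. fst p \<ge> 1 \<Longrightarrow> length xs \<le> weight xs \<and> (\<forall>p\<in>set xs. fst p \<le> weight xs)"
proof (induction xs)
  case Nil then show ?case by (simp add: weight_def)
next
  case (Cons x xs)
  then have "length xs \<le> weight xs \<and> (\<forall>p\<in>set xs. fst p \<le> weight xs)" by simp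
  with Cons(2) show ?case by (auto simp: weight_Cons)
qed

lemma Cfin: "finite {xs \<in> C r. weight xs = n}"
proof (rule finite_subset)
  show "{xs \<in> C r. weight xs = n} \<subseteq> {xs. set xs \<subseteq> {0..n} \<times> UNIV \<and> length xs \<le> n}"
  proof
    fix xs assume a: "xs \<in> {xs \<in> C r. weight xs = n}"
    then have pos: "\<forall>p\<in>set xs. fst p \<ge> 1" unfolding C_iff by blast
    from len_weight[OF pos] a have "length xs \<le> n" "\<forall>p\<in>set xs. fst p \<le> n" by auto
    then show "xs \<in> {xs. set xs \<subseteq> {0..n} \<times> UNIV \<and> length xs \<le> n}" by auto
  qed
  show "finite {xs. set xs \<subseteq> {0..n} \<times> (UNIV :: bool set) \<and> length xs \<le> n}"
    by (rule finite_lists_length_le) simp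
qed

lemma psets_fin: "finite {ps. length ps = m \<and> sorted_wrt (\<ge>) ps \<and> w + sum_list ps = (n::nat)}"
proof (rule finite_subset)
  show "{ps. length ps = m \<and> sorted_wrt (\<ge>) ps \<and> w + sum_list ps = n} \<subseteq> {ps. set ps \<subseteq> {0..n} \<and> length ps = m}"
    using member_le_sum_list by fastforce
  show "finite {ps. set ps \<subseteq> {0..n} \<and> length ps = m}" by (rule finite_lists_length_eq) simp
qed

lemma card_m:
  assumes r: "r \<in> {1, 2}" and m: "m \<ge> 1"
  shows "card {xs \<in> C r. length xs = m \<and> weight xs = n} =
    (\<Sum>bs\<in>Gr r m. card {ps. length ps = m \<and> sorted_wrt (\<ge>) ps \<and> weight bs + sum_list ps = n})"
proof -
  define S where "S = (SIGMA bs:Gr r m. {ps. length ps = m \<and> sorted_wrt (\<ge>) ps \<and> weight bs + sum_list ps = n})"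
  define f where "f = (\<lambda>(bs, ps). add_parts bs ps)"
  have img: "f ` S = {xs \<in> C r. length xs = m \<and> weight xs = n}"
  proof
    show "f ` S \<subseteq> {xs \<in> C r. length xs = m \<and> weight xs = n}"
    proof
      fix xs assume "xs \<in> f ` S"
      then obtain bs ps where bp: "(bs, ps) \<in> S" "xs = add_parts bs ps" by (auto simp: f_def)
      then have bs: "bs \<in> Gr r m" and ps: "length ps = m" "sorted_wrt (\<ge>) ps" "weight bs + sum_list ps = n"
        by (auto simp: S_def)
      have lb: "length bs = m" using bs Gr_iff[OF r] by auto
      have "xs \<in> C r" using T3[OF r bs ps(1,2)] bp(2) by simp
      moreover have "length xs = m" using bp(2) add_parts_len[of ps bs] lb ps(1) by simp
      moreover have "weight xs = n" using bp(2) weight_add_parts[of ps bs] lb ps by simp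
      ultimately show "xs \<in> {xs \<in> C r. length xs = m \<and> weight xs = n}" by simp
    qed
  next
    show "{xs \<in> C r. length xs = m \<and> weight xs = n} \<subseteq> f ` S"
    proof
      fix xs assume a: "xs \<in> {xs \<in> C r. length xs = m \<and> weight xs = n}"
      then have "\<exists>!(bs, ps). bs \<in> Gr r m \<and> length ps = m \<and> sorted_wrt (\<ge>) ps \<and> xs = add_parts bs ps"
        using T2[OF r m] by blast
      then obtain bs ps where bp: "bs \<in> Gr r m" "length ps = m" "sorted_wrt (\<ge>) ps" "xs = add_parts bs ps"
        by blast
      have lb: "length bs = m" using bp(1) Gr_iff[OF r] by auto
      have "weight bs + sum_list ps = n" using a bp(4) weight_add_parts[of ps bs] lb bp(2) by simp
      then have "(bs, ps) \<in> S" using bp by (simp add: S_def)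
      then show "xs \<in> f ` S" using bp(4) unfolding f_def by (auto intro: image_eqI[of _ _ "(bs, ps)"])
    qed
  qed
  have inj: "inj_on f S"
  proof (rule inj_onI)
    fix x y assume x: "x \<in> S" and y: "y \<in> S" and e: "f x = f y"
    obtain bs ps where xx: "x = (bs, ps)" by (cases x)
    obtain bs' ps' where yy: "y = (bs', ps')" by (cases y)
    from x xx have bs: "bs \<in> Gr r m" and ps: "length ps = m" "sorted_wrt (\<ge>) ps" by (auto simp: S_def)
    from y yy have bs': "bs' \<in> Gr r m" and ps': "length ps' = m" "sorted_wrt (\<ge>) ps'" by (auto simp: S_def)
    define xs where "xs = add_parts bs ps"
    have xs': "xs = add_parts bs' ps'" using e xx yy by (simp add: f_def xs_def)
    have lb: "length bs = m" using bs Gr_iff[OF r] by auto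
    have inC: "xs \<in> C r" using T3[OF r bs ps] by (simp add: xs_def)
    have lx: "length xs = m" using add_parts_len[of ps bs] lb ps(1) by (simp add: xs_def)
    have u: "\<exists>!(bs, ps). bs \<in> Gr r m \<and> length ps = m \<and> sorted_wrt (\<ge>) ps \<and> xs = add_parts bs ps"
      by (rule T2[OF r m inC lx])
    have "(bs, ps) = (bs', ps')"
      by (rule uniq_helper[OF u]) (use bs ps bs' ps' xs' in \<open>auto simp: xs_def\<close>)
    then show "x = y" using xx yy by simp
  qed
  have "card {xs \<in> C r. length xs = m \<and> weight xs = n} = card S"
    using card_image[OF inj] img by simp
  also have "card S = (\<Sum>bs\<in>Gr r m. card {ps. length ps = m \<and> sorted_wrt (\<ge>) ps \<and> weight bs + sum_list ps = n})"
    unfolding S_def by (rule card_SigmaI) (use T1[OF r] psets_fin in auto)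
  finally show ?thesis .
qed

lemma card_total:
  assumes "n \<le> N"
  shows "card {xs \<in> C r. weight xs = n} = (\<Sum>m<Suc N. card {xs \<in> C r. length xs = m \<and> weight xs = n})"
proof -
  have "{xs \<in> C r. weight xs = n} = (\<Union>m\<in>{..<Suc N}. {xs \<in> C r. length xs = m \<and> weight xs = n})"
  proof
    show "{xs \<in> C r. weight xs = n} \<subseteq> (\<Union>m\<in>{..<Suc N}. {xs \<in> C r. length xs = m \<and> weight xs = n})"
    proof
      fix xs assume a: "xs \<in> {xs \<in> C r. weight xs = n}"
      then have pos: "\<forall>p\<in>set xs. fst p \<ge> 1" unfolding C_iff by blast
      from len_weight[OF pos] a assms have "length xs < Suc N" by auto
      with a show "xs \<in> (\<Union>m\<in>{..<Suc N}. {xs \<in> C r. length xs = m \<and> weight xs = n})" by auto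
    qed
  qed auto
  then have "card {xs \<in> C r. weight xs = n} = card (\<Union>m\<in>{..<Suc N}. {xs \<in> C r. length xs = m \<and> weight xs = n})"
    by simp
  also have "\<dots> = (\<Sum>m<Suc N. card {xs \<in> C r. length xs = m \<and> weight xs = n})"
    by (rule card_UN_disjoint) (auto intro: finite_subset[OF _ Cfin[of r n]])
  finally show ?thesis .
qed

lemma card_0: "card {xs \<in> C r. length xs = 0 \<and> weight xs = n} = (if n = 0 then 1 else 0)"
proof -
  have "[] \<in> C r" unfolding C_iff by simp
  then have "{xs \<in> C r. length xs = 0 \<and> weight xs = n} = (if n = 0 then {[]} else {})"
    by (auto simp: weight_def)
  then show ?thesis by simp
qed

theorem mainTheorem11:
  fixes r :: nat
  assumes "r \<in> {1, 2}"
  shows "(\<forall>m\<ge>1. finite (Gr r m)) \<and>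
    (\<forall>m\<ge>1. \<forall>xs\<in>C r. length xs = m \<longrightarrow>
       (\<exists>!(bs, ps). bs \<in> Gr r m \<and> length ps = m \<and> sorted_wrt (\<ge>) ps \<and>
          xs = add_parts bs ps)) \<and>
    (\<forall>m\<ge>1. \<forall>bs\<in>Gr r m. \<forall>ps. length ps = m \<and> sorted_wrt (\<ge>) ps \<longrightarrow>
       add_parts bs ps \<in> C r) \<and>
    summable (\<lambda>m. inverse (qpoch (Suc m)) *
                   (\<Sum>xs\<in>Gr r (Suc m). fps_X ^ weight xs)) \<and>
    gen_fun (C r) = 1 + (\<Sum>m. inverse (qpoch (Suc m)) *
                   (\<Sum>xs\<in>Gr r (Suc m). fps_X ^ weight xs))"
proof -
  note r = assms
  define a where "a m = inverse (qpoch (Suc m)) * (\<Sum>xs\<in>Gr r (Suc m). fps_X ^ weight xs)" for m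
  have coeff: "fps_nth (a m) n = of_nat (card {xs \<in> C r. length xs = Suc m \<and> weight xs = n})" for m n
  proof -
    have "fps_nth (a m) n = (\<Sum>bs\<in>Gr r (Suc m). fps_nth (inverse (qpoch (Suc m)) * fps_X ^ weight bs) n)"
      unfolding a_def sum_distrib_left fps_sum_nth ..
    also have "\<dots> = (\<Sum>bs\<in>Gr r (Suc m). of_nat (card {ps. length ps = Suc m \<and> sorted_wrt (\<ge>) ps \<and> weight bs + sum_list ps = n}))"
      unfolding coeff_lemma ..
    also have "\<dots> = of_nat (card {xs \<in> C r. length xs = Suc m \<and> weight xs = n})"
      unfolding card_m[OF r, of "Suc m" n, simplified] of_nat_sum ..
    finally show ?thesis .
  qed
  have lim: "(\<lambda>N. \<Sum>m<N. a m) \<longlonglongrightarrow> gen_fun (C r) - 1"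
  proof (rule tendsto_fpsI)
    fix n
    show "\<forall>\<^sub>F N in sequentially. fps_nth (\<Sum>m<N. a m) n = fps_nth (gen_fun (C r) - 1) n"
      unfolding eventually_sequentially
    proof (intro exI allI impI)
      fix N assume N: "n \<le> N"
      have "fps_nth (\<Sum>m<N. a m) n = (\<Sum>m<N. of_nat (card {xs \<in> C r. length xs = Suc m \<and> weight xs = n}))"
        unfolding fps_sum_nth coeff ..
      also have "\<dots> = of_nat (\<Sum>m<N. card {xs \<in> C r. length xs = Suc m \<and> weight xs = n})"
        by simp
      also have "(\<Sum>m<N. card {xs \<in> C r. length xs = Suc m \<and> weight xs = n}) =
          card {xs \<in> C r. weight xs = n} - (if n = 0 then 1 else 0)"
        unfolding card_total[OF N, of r] sum.lessThan_Suc_shift card_0 by simp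
      also have "of_nat (card {xs \<in> C r. weight xs = n} - (if n = 0 then 1 else 0)) =
          (of_nat (card {xs \<in> C r. weight xs = n}) - (if n = 0 then 1 else 0) :: rat)"
        unfolding card_total[OF N, of r] sum.lessThan_Suc_shift card_0 by (simp add: of_nat_diff)
      also have "\<dots> = fps_nth (gen_fun (C r) - 1) n"
        by (simp add: gen_fun_def)
      finally show "fps_nth (\<Sum>m<N. a m) n = fps_nth (gen_fun (C r) - 1) n" .
    qed
  qed
  then have s: "a sums (gen_fun (C r) - 1)" unfolding sums_def .
  have sm: "summable a" using s by (rule sums_summable)
  have su: "suminf a = gen_fun (C r) - 1" using s by (rule sums_unique[symmetric])
  show ?thesis
  proof (intro conjI allI impI ballI)
    show "finite (Gr r m)" for m by (rule T1[OF r])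
    show "\<exists>!(bs, ps). bs \<in> Gr r m \<and> length ps = m \<and> sorted_wrt (\<ge>) ps \<and> xs = add_parts bs ps"
      if "m \<ge> 1" "xs \<in> C r" "length xs = m" for m xs using T2[OF r that] .
    show "add_parts bs ps \<in> C r" if "m \<ge> 1" "bs \<in> Gr r m" "length ps = m \<and> sorted_wrt (\<ge>) ps" for m bs ps
      using T3[OF r that(2)] that(3) by blast
    show "summable (\<lambda>m. inverse (qpoch (Suc m)) * (\<Sum>xs\<in>Gr r (Suc m). fps_X ^ weight xs))"
      using sm unfolding a_def .
    show "gen_fun (C r) = 1 + (\<Sum>m. inverse (qpoch (Suc m)) * (\<Sum>xs\<in>Gr r (Suc m). fps_X ^ weight xs))"
      using su unfolding a_def by simp
  qed
qed

end
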